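(* Let $\mathcal{P}$ be a pointsymmetric convex polyhedron with radius $1$ and $\widetilde{\mathcal{P}}$ a $\kappa$-rational approximation of it; let $\widetilde S\in\widetilde{\mathcal{P}}$. Let $\varepsilon>0$, $\bar\theta_1,\bar\varphi_1,\bar\theta_2,\bar\varphi_2,\bar\alpha\in\mathbb{Q}\cap[-4,4]$, and $w\in\mathbb{Q}^2$ a unit vector. Write $\overline{M_k}=M_{\mathbb{Q}}(\bar\theta_k,\bar\varphi_k)$, $\overline{M_k}^\theta=M^\theta_{\mathbb{Q}}(\bar\theta_k,\bar\varphi_k)$, $\overline{M_k}^\varphi=M^\varphi_{\mathbb{Q}}(\bar\theta_k,\bar\varphi_k)$ for $k=1,2$ and set \[ G^{\mathbb{Q}}=\langle R_{\mathbb{Q}}(\bar\alpha)\overline{M_1}\widetilde S,w\rangle-\varepsilon\big(|\langle R'_{\mathbb{Q}}(\bar\alpha)\overline{M_1}\widetilde S,w\rangle|+|\langle R_{\mathbb{Q}}(\bar\alpha)\overline{M_1}^\theta\widetilde S,w\rangle|+|\langle R_{\mathbb{Q}}(\bar\alpha)\overline{M_1}^\varphi\widetilde S,w\rangle|\big)-\tfrac92\varepsilon^2-4\kappa(1+3\varepsilon), \] \[ H^{\mathbb{Q}}_P=\langle\overline{M_2}P,w\rangle+\varepsilon\big(|\langle\overline{M_2}^\theta P,w\rangle|+|\langle\overline{M_2}^\varphi P,w\rangle|\big)+2\varepsilon^2+3\kappa(1+2\varepsilon). \] If $G^{\mathbb{Q}}>\max_{P\in\widetilde{\mathcal{P}}}H^{\mathbb{Q}}_P$,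 then there is no $(\theta_1,\varphi_1,\theta_2,\varphi_2,\alpha)$ with $|\theta_k-\bar\theta_k|,|\varphi_k-\bar\varphi_k|,|\alpha-\bar\alpha|\le\varepsilon$ such that $R(\alpha)M(\theta_1,\varphi_1)\mathcal{P}\subset\operatorname{int}\operatorname{conv}(M(\theta_2,\varphi_2)\mathcal{P})$.
   Context: $\kappa=10^{-10}$. $R(\alpha)=\begin{pmatrix}\cos\alpha&-\sin\alpha\\ \sin\alpha&\cos\alpha\end{pmatrix}$, $R'=\frac{d}{d\alpha}R$; $M(\theta,\varphi)=\begin{pmatrix}-\sin\theta&\cos\theta&0\\ -\cos\theta\cos\varphi&-\sin\theta\cos\varphi&\sin\varphi\end{pmatrix}$, $M^\theta=\partial_\theta M$, $M^\varphi=\partial_\varphi M$. Define $\sin_{\mathbb{Q}}(x)=\sum_{k=0}^{12}(-1)^k\frac{x^{2k+1}}{(2k+1)!}$ and $\cos_{\mathbb{Q}}(x)=\sum_{k=0}^{12}(-1)^k\frac{x^{2k}}{(2k)!}$; $R_{\mathbb{Q}},R'_{\mathbb{Q}},M_{\mathbb{Q}},M^\theta_{\mathbb{Q}},M^\varphi_{\mathbb{Q}}$ are obtained from $R,R',M,M^\theta,M^\varphi$ by replacing $\sin,\cos$ by $\sin_{\mathbb{Q}},\cos_{\mathbb{Q}}$. A polyhedron is a finite non-degenerate set of points of $\mathbb{R}^3$ in convex position; pointsymmetric means $\mathcal{P}=-\mathcal{P}$; radius $1$ means all points have norm $\le1$ with equality for some. A $\kappa$-rational approximation of $\mathcal{P}=\{P_i\}$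 is a set $\widetilde{\mathcal{P}}=\{\widetilde P_i\}\subset\mathbb{Q}^3$ with $\|P_i-\widetilde P_i\|\le\kappa$ for each $i$. *)

theory Defs
  imports "HOL-Analysis.Analysis"
begin

definition kappa :: real where "kappa = 1 / 10 ^ 10"

definition sinQ :: "real \<Rightarrow> real" where
  "sinQ x = (\<Sum>k=0..12. (-1) ^ k * x ^ (2*k+1) / fact (2*k+1))"

definition cosQ :: "real \<Rightarrow> real" where
  "cosQ x = (\<Sum>k=0..12. (-1) ^ k * x ^ (2*k) / fact (2*k))"

definition Rgen :: "(real \<Rightarrow> real) \<Rightarrow> (real \<Rightarrow> real) \<Rightarrow> real \<Rightarrow> real^2^2" where
  "Rgen s c a = vector [vector [c a, - s a], vector [s a, c a]]"

definition R'gen :: "(real \<Rightarrow> real) \<Rightarrow> (real \<Rightarrow> real) \<Rightarrow> real \<Rightarrow> real^2^2" where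
  "R'gen s c a = vector [vector [- s a, - c a], vector [c a, - s a]]"

definition Mgen :: "(real \<Rightarrow> real) \<Rightarrow> (real \<Rightarrow> real) \<Rightarrow> real \<Rightarrow> real \<Rightarrow> real^3^2" where
  "Mgen s c t p = vector [vector [- s t, c t, 0],
                          vector [- c t * c p, - s t * c p, s p]]"

text \<open>partial derivative of M in theta\<close>
definition MTgen :: "(real \<Rightarrow> real) \<Rightarrow> (real \<Rightarrow> real) \<Rightarrow> real \<Rightarrow> real \<Rightarrow> real^3^2" where
  "MTgen s c t p = vector [vector [- c t, - s t, 0],
                           vector [s t * c p, - c t * c p, 0]]"

text \<open>partial derivative of M in phi\<close>
definition MPgen :: "(real \<Rightarrow> real) \<Rightarrow> (real \<Rightarrow> real) \<Rightarrow> real \<Rightarrow> real \<Rightarrow> real^3^2" where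
  "MPgen s c t p = vector [vector [0, 0, 0],
                           vector [c t * s p, s t * s p, c p]]"

abbreviation "Rm \<equiv> Rgen sin cos"
abbreviation "Mm \<equiv> Mgen sin cos"
abbreviation "RQ \<equiv> Rgen sinQ cosQ"
abbreviation "R'Q \<equiv> R'gen sinQ cosQ"
abbreviation "MQ \<equiv> Mgen sinQ cosQ"
abbreviation "MTQ \<equiv> MTgen sinQ cosQ"
abbreviation "MPQ \<equiv> MPgen sinQ cosQ"

definition rat_vec :: "real^'n \<Rightarrow> bool" where
  "rat_vec x \<longleftrightarrow> (\<forall>i. x $ i \<in> \<rat>)"

definition polyhedron :: "(real^3) set \<Rightarrow> bool" where
  "polyhedron P \<longleftrightarrow> finite P \<and> affine hull P = UNIV \<and>
     (\<forall>p\<in>P. p \<notin> convex hull (P - {p}))"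

definition pointsymmetric :: "(real^3) set \<Rightarrow> bool" where
  "pointsymmetric P \<longleftrightarrow> uminus ` P = P"

definition radius_one :: "(real^3) set \<Rightarrow> bool" where
  "radius_one P \<longleftrightarrow> (\<forall>p\<in>P. norm p \<le> 1) \<and> (\<exists>p\<in>P. norm p = 1)"

definition kappa_rat_approx :: "(real^3) set \<Rightarrow> (real^3) set \<Rightarrow> bool" where
  "kappa_rat_approx P Q \<longleftrightarrow> (\<exists>f. Q = f ` P \<and>
      (\<forall>p\<in>P. rat_vec (f p) \<and> norm (p - f p) \<le> kappa))"

end

theory Submission
  imports Defs
begin


lemma sin_sum_eq: "(\<Sum>m<2*n. sin_coeff m * (x::real) ^ m) = (\<Sum>k<n. (-1) ^ k * x ^ (2*k+1) / fact (2*k+1))"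
proof (induction n)
  case (Suc n)
  have "2 * Suc n = Suc (Suc (2*n))" by simp
  then show ?case using Suc by (simp add: sin_coeff_def)
qed simp

lemma cos_sum_eq: "(\<Sum>m<2*n. cos_coeff m * (x::real) ^ m) = (\<Sum>k<n. (-1) ^ k * x ^ (2*k) / fact (2*k))"
proof (induction n)
  case (Suc n)
  have "2 * Suc n = Suc (Suc (2*n))" by simp
  then show ?case using Suc by (simp add: cos_coeff_def)
qed simp

lemma sinQ_alt: "sinQ x = (\<Sum>m<26. sin_coeff m * x ^ m)"
proof -
  have "{0..12::nat} = {..<13}" by auto
  then show ?thesis using sin_sum_eq[where n=13 and x=x] by (simp add: sinQ_def)
qed

lemma cosQ_alt: "cosQ x = (\<Sum>m<26. cos_coeff m * x ^ m)"
proof -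
  have "{0..12::nat} = {..<13}" by auto
  then show ?thesis using cos_sum_eq[where n=13 and x=x] by (simp add: cosQ_def)
qed

definition dltA :: real where "dltA = 12 / 10^12"

lemma fact_bound: "inverse (fact 26) * (4::real) ^ 26 \<le> dltA"
proof -
  have "(fact 26::real) = 403291461126605635584000000"
    by (simp add: fact_numeral)
  then show ?thesis by (simp add: dltA_def)
qed

lemma sinQ_err: assumes "\<bar>x\<bar> \<le> 4" shows "\<bar>sin x - sinQ x\<bar> \<le> dltA"
proof -
  have "\<bar>sin x - (\<Sum>m<26. sin_coeff m * x ^ m)\<bar> \<le> inverse (fact 26) * \<bar>x\<bar> ^ 26"
    by (rule Maclaurin_sin_bound)
  moreover have "\<bar>x\<bar> ^ 26 \<le> 4 ^ 26"
    by (rule power_mono[OF assms]) simp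
  then have "inverse (fact 26) * \<bar>x\<bar> ^ 26 \<le> inverse (fact 26) * 4 ^ 26"
    by (rule mult_left_mono) simp
  ultimately show ?thesis using fact_bound unfolding sinQ_alt by linarith
qed

lemma cosQ_err: assumes "\<bar>x\<bar> \<le> 4" shows "\<bar>cos x - cosQ x\<bar> \<le> dltA"
proof -
  obtain t where t: "cos x = (\<Sum>m<26. cos_coeff m * x ^ m) + (cos(t + 1/2 * real 26 * pi) / fact 26) * x ^ 26"
    using Maclaurin_cos_expansion by blast
  define c where "c = cos(t + 1/2 * real 26 * pi)"
  have c1: "\<bar>c\<bar> \<le> 1" unfolding c_def by simp
  have e: "cos x - cosQ x = c * inverse (fact 26) * x ^ 26"
    unfolding cosQ_alt using t unfolding c_def[symmetric] by (simp add: divide_inverse)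
  have "\<bar>c * inverse (fact 26) * x ^ 26\<bar> = \<bar>c\<bar> * (inverse (fact 26) * \<bar>x\<bar> ^ 26)"
    by (simp add: abs_mult power_abs)
  also have "\<dots> \<le> 1 * (inverse (fact 26) * 4 ^ 26)"
  proof (rule mult_mono[OF c1])
    have "\<bar>x\<bar> ^ 26 \<le> 4 ^ 26" by (rule power_mono[OF assms]) simp
    then show "inverse (fact 26) * \<bar>x\<bar> ^ 26 \<le> inverse (fact 26) * 4 ^ 26"
      by (rule mult_left_mono) simp
  qed auto
  finally show ?thesis using fact_bound e by simp
qed



definition rot :: "real \<Rightarrow> real \<Rightarrow> real \<Rightarrow> real \<Rightarrow> real \<Rightarrow> real \<Rightarrow> real" where
  "rot c s A B u v = u * (c * A - s * B) + v * (s * A + c * B)"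

definition dot3 :: "real \<Rightarrow> real \<Rightarrow> real \<Rightarrow> real \<Rightarrow> real \<Rightarrow> real \<Rightarrow> real" where
  "dot3 a1 a2 a3 x y z = a1 * x + a2 * y + a3 * z"

lemma rot_sq:
  assumes "c\<^sup>2 + s\<^sup>2 = 1" "u\<^sup>2 + v\<^sup>2 \<le> 1"
  shows "(rot c s A B u v)\<^sup>2 \<le> A\<^sup>2 + B\<^sup>2"
proof -
  define X where "X = c * A - s * B"
  define Y where "Y = s * A + c * B"
  have XY: "X\<^sup>2 + Y\<^sup>2 = (c\<^sup>2 + s\<^sup>2) * (A\<^sup>2 + B\<^sup>2)"
    unfolding X_def Y_def by (simp add: power2_eq_square algebra_simps)
  have "(u * X + v * Y)\<^sup>2 = (u\<^sup>2 + v\<^sup>2) * (X\<^sup>2 + Y\<^sup>2) - (u * Y - v * X)\<^sup>2"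
    by (simp add: power2_eq_square algebra_simps)
  also have "\<dots> \<le> (u\<^sup>2 + v\<^sup>2) * (X\<^sup>2 + Y\<^sup>2)" by simp
  also have "\<dots> \<le> 1 * (X\<^sup>2 + Y\<^sup>2)"
    by (rule mult_right_mono[OF assms(2)]) simp
  finally show ?thesis using XY assms(1) unfolding rot_def X_def Y_def by simp
qed

lemma abs_le_of_sq: fixes r q :: real assumes "r\<^sup>2 \<le> q\<^sup>2" "0 \<le> q" shows "\<bar>r\<bar> \<le> q"
  using assms by (metis abs_le_square_iff abs_of_nonneg)

lemma bessel:
  assumes "a1*b1 + a2*b2 + a3*b3 = 0" "a1\<^sup>2 + a2\<^sup>2 + a3\<^sup>2 \<le> 1" "b1\<^sup>2 + b2\<^sup>2 + b3\<^sup>2 \<le> 1"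
  shows "(dot3 a1 a2 a3 x y z)\<^sup>2 + (dot3 b1 b2 b3 x y z)\<^sup>2 \<le> x\<^sup>2 + y\<^sup>2 + z\<^sup>2"
proof -
  define A where "A = dot3 a1 a2 a3 x y z"
  define B where "B = dot3 b1 b2 b3 x y z"
  have "0 \<le> (x - A*a1 - B*b1)\<^sup>2 + (y - A*a2 - B*b2)\<^sup>2 + (z - A*a3 - B*b3)\<^sup>2" by simp
  also have "\<dots> = x\<^sup>2 + y\<^sup>2 + z\<^sup>2 - 2*A\<^sup>2 - 2*B\<^sup>2 + A\<^sup>2 * (a1\<^sup>2 + a2\<^sup>2 + a3\<^sup>2)
     + B\<^sup>2 * (b1\<^sup>2 + b2\<^sup>2 + b3\<^sup>2) + 2*A*B*(a1*b1 + a2*b2 + a3*b3)"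
    unfolding A_def B_def dot3_def by (simp add: power2_eq_square algebra_simps)
  finally have 1: "2*A\<^sup>2 + 2*B\<^sup>2 \<le> x\<^sup>2 + y\<^sup>2 + z\<^sup>2 + A\<^sup>2 * (a1\<^sup>2 + a2\<^sup>2 + a3\<^sup>2)
     + B\<^sup>2 * (b1\<^sup>2 + b2\<^sup>2 + b3\<^sup>2)" using assms(1) by simp
  have "A\<^sup>2 * (a1\<^sup>2 + a2\<^sup>2 + a3\<^sup>2) \<le> A\<^sup>2 * 1" by (rule mult_left_mono[OF assms(2)]) simp
  moreover have "B\<^sup>2 * (b1\<^sup>2 + b2\<^sup>2 + b3\<^sup>2) \<le> B\<^sup>2 * 1" by (rule mult_left_mono[OF assms(3)]) simp
  ultimately show ?thesis using 1 unfolding A_def B_def by linarith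
qed

lemma Fb:
  assumes "c\<^sup>2 + s\<^sup>2 = 1" "u\<^sup>2 + v\<^sup>2 \<le> 1"
    "a1*b1 + a2*b2 + a3*b3 = 0" "a1\<^sup>2 + a2\<^sup>2 + a3\<^sup>2 \<le> 1" "b1\<^sup>2 + b2\<^sup>2 + b3\<^sup>2 \<le> 1"
    "x\<^sup>2 + y\<^sup>2 + z\<^sup>2 \<le> r\<^sup>2" "0 \<le> r"
  shows "\<bar>rot c s (dot3 a1 a2 a3 x y z) (dot3 b1 b2 b3 x y z) u v\<bar> \<le> r"
  apply (rule abs_le_of_sq[OF _ assms(7)])
  using rot_sq[OF assms(1,2)] bessel[OF assms(3,4,5), of x y z] assms(6) by (meson order_trans)

lemma rot_lin_AB: "rot c s A B u v - rot c s A' B' u v = rot c s (A - A') (B - B') u v"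
  by (simp add: rot_def algebra_simps)
lemma rot_lin_cs: "rot c s A B u v - rot c' s' A B u v = rot (c - c') (s - s') A B u v"
  by (simp add: rot_def algebra_simps)
lemma dot3_lin: "dot3 a1 a2 a3 x y z - dot3 a1 a2 a3 x' y' z' = dot3 a1 a2 a3 (x - x') (y - y') (z - z')"
  by (simp add: dot3_def algebra_simps)
lemma dot3_lin2: "dot3 a1 a2 a3 x y z - dot3 a1' a2' a3' x y z = dot3 (a1 - a1') (a2 - a2') (a3 - a3') x y z"
  by (simp add: dot3_def algebra_simps)

lemma rot_abs_sum:
  assumes "c\<^sup>2 + s\<^sup>2 = 1" "u\<^sup>2 + v\<^sup>2 \<le> 1"
  shows "\<bar>rot c s A B u v\<bar> \<le> \<bar>A\<bar> + \<bar>B\<bar>"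
proof (rule abs_le_of_sq)
  have "(rot c s A B u v)\<^sup>2 \<le> A\<^sup>2 + B\<^sup>2" by (rule rot_sq[OF assms])
  also have "\<dots> \<le> (\<bar>A\<bar> + \<bar>B\<bar>)\<^sup>2" by (simp add: power2_eq_square algebra_simps)
  finally show "(rot c s A B u v)\<^sup>2 \<le> (\<bar>A\<bar> + \<bar>B\<bar>)\<^sup>2" .
qed simp

lemma sum_abs_sq: fixes p q :: real assumes "p\<^sup>2 + q\<^sup>2 \<le> r\<^sup>2" "0 \<le> r"
  shows "\<bar>p\<bar> + \<bar>q\<bar> \<le> 142/100 * r"
proof (rule abs_le_of_sq[where r="\<bar>p\<bar> + \<bar>q\<bar>", simplified])
  have "(\<bar>p\<bar> + \<bar>q\<bar>)\<^sup>2 \<le> 2 * (p\<^sup>2 + q\<^sup>2)"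
    using sum_squares_ge_zero[of "\<bar>p\<bar> - \<bar>q\<bar>" 0]
    by (simp add: power2_eq_square algebra_simps)
  also have "\<dots> \<le> 2 * r\<^sup>2" using assms by simp
  also have "\<dots> \<le> (142/100 * r)\<^sup>2" by (simp add: power2_eq_square)
  finally show "(\<bar>p\<bar> + \<bar>q\<bar>)\<^sup>2 \<le> (142/100 * r)\<^sup>2" .
qed (use assms in simp)

lemma dot3_err:
  assumes "\<bar>d1\<bar> \<le> e" "\<bar>d2\<bar> \<le> e" "\<bar>d3\<bar> \<le> e" "\<bar>x\<bar> \<le> K" "\<bar>y\<bar> \<le> K" "\<bar>z\<bar> \<le> K"
  shows "\<bar>dot3 d1 d2 d3 x y z\<bar> \<le> 3 * e * K"
proof -
  have "\<bar>d1 * x\<bar> \<le> e * K" unfolding abs_mult by (rule mult_mono) (use assms in auto)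
  moreover have "\<bar>d2 * y\<bar> \<le> e * K" unfolding abs_mult by (rule mult_mono) (use assms in auto)
  moreover have "\<bar>d3 * z\<bar> \<le> e * K" unfolding abs_mult by (rule mult_mono) (use assms in auto)
  moreover have "\<bar>d1 * x + d2 * y + d3 * z\<bar> \<le> \<bar>d1 * x\<bar> + \<bar>d2 * y\<bar> + \<bar>d3 * z\<bar>"
    by linarith
  ultimately show ?thesis unfolding dot3_def by linarith
qed

definition dlt :: real where "dlt = 12 / 10^12"
definition dl2 :: real where "dl2 = 25 / 10^12"

lemma T3_bound:
  assumes "\<bar>dc\<bar> \<le> e" "\<bar>ds\<bar> \<le> e"
  shows "\<bar>rot dc ds A B u v\<bar> \<le> (\<bar>u\<bar> + \<bar>v\<bar>) * (e * (\<bar>A\<bar> + \<bar>B\<bar>))"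
proof -
  have 1: "\<bar>dc * A\<bar> \<le> e * \<bar>A\<bar>" "\<bar>ds * B\<bar> \<le> e * \<bar>B\<bar>" "\<bar>ds * A\<bar> \<le> e * \<bar>A\<bar>" "\<bar>dc * B\<bar> \<le> e * \<bar>B\<bar>"
    unfolding abs_mult by (auto intro!: mult_right_mono assms)
  have X: "\<bar>dc * A - ds * B\<bar> \<le> e * \<bar>A\<bar> + e * \<bar>B\<bar>"
    using abs_triangle_ineq4[of "dc*A" "ds*B"] 1 by linarith
  have Y: "\<bar>ds * A + dc * B\<bar> \<le> e * \<bar>A\<bar> + e * \<bar>B\<bar>"
    using abs_triangle_ineq[of "ds*A" "dc*B"] 1 by linarith
  have U: "\<bar>u * (dc * A - ds * B)\<bar> \<le> \<bar>u\<bar> * (e * \<bar>A\<bar> + e * \<bar>B\<bar>)"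
    unfolding abs_mult by (rule mult_left_mono[OF X]) simp
  have V: "\<bar>v * (ds * A + dc * B)\<bar> \<le> \<bar>v\<bar> * (e * \<bar>A\<bar> + e * \<bar>B\<bar>)"
    unfolding abs_mult by (rule mult_left_mono[OF Y]) simp
  have "\<bar>rot dc ds A B u v\<bar> \<le> \<bar>u * (dc * A - ds * B)\<bar> + \<bar>v * (ds * A + dc * B)\<bar>"
    unfolding rot_def by (rule abs_triangle_ineq)
  also have "\<dots> \<le> \<bar>u\<bar> * (e * \<bar>A\<bar> + e * \<bar>B\<bar>) + \<bar>v\<bar> * (e * \<bar>A\<bar> + e * \<bar>B\<bar>)"
    using U V by linarith
  also have "\<dots> = (\<bar>u\<bar> + \<bar>v\<bar>) * (e * (\<bar>A\<bar> + \<bar>B\<bar>))" by (simp add: algebra_simps)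
  finally show ?thesis .
qed

lemma approx:
  assumes cs: "c\<^sup>2 + s\<^sup>2 = 1" and uv: "u\<^sup>2 + v\<^sup>2 \<le> 1"
    and rows: "a1*b1 + a2*b2 + a3*b3 = 0" "a1\<^sup>2 + a2\<^sup>2 + a3\<^sup>2 \<le> 1" "b1\<^sup>2 + b2\<^sup>2 + b3\<^sup>2 \<le> 1"
    and ec: "\<bar>c - c'\<bar> \<le> dlt" "\<bar>s - s'\<bar> \<le> dlt"
    and ea: "\<bar>a1 - a1'\<bar> \<le> dl2" "\<bar>a2 - a2'\<bar> \<le> dl2" "\<bar>a3 - a3'\<bar> \<le> dl2"
    and eb: "\<bar>b1 - b1'\<bar> \<le> dl2" "\<bar>b2 - b2'\<bar> \<le> dl2" "\<bar>b3 - b3'\<bar> \<le> dl2"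
    and S': "x'\<^sup>2 + y'\<^sup>2 + z'\<^sup>2 \<le> (1 + kappa)\<^sup>2"
    and SS': "(x - x')\<^sup>2 + (y - y')\<^sup>2 + (z - z')\<^sup>2 \<le> kappa\<^sup>2"
  shows "\<bar>rot c s (dot3 a1 a2 a3 x y z) (dot3 b1 b2 b3 x y z) u v
          - rot c' s' (dot3 a1' a2' a3' x' y' z') (dot3 b1' b2' b3' x' y' z') u v\<bar> \<le> kappa + 18 / 10^11"
proof -
  define K where "K = 1 + kappa"
  have k0: "0 \<le> kappa" "kappa \<le> 1" by (simp_all add: kappa_def)
  have K0: "0 \<le> K" using k0 unfolding K_def by simp
  have sq: "0 \<le> x'\<^sup>2" "0 \<le> y'\<^sup>2" "0 \<le> z'\<^sup>2" by simp_all
  have "x'\<^sup>2 \<le> K\<^sup>2" "y'\<^sup>2 \<le> K\<^sup>2" "z'\<^sup>2 \<le> K\<^sup>2" using S' sq unfolding K_def by linarith+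
  then have Kx: "\<bar>x'\<bar> \<le> K" "\<bar>y'\<bar> \<le> K" "\<bar>z'\<bar> \<le> K" using abs_le_of_sq K0 by blast+
  define A where "A = dot3 a1 a2 a3 x' y' z'"
  define B where "B = dot3 b1 b2 b3 x' y' z'"
  define A' where "A' = dot3 a1' a2' a3' x' y' z'"
  define B' where "B' = dot3 b1' b2' b3' x' y' z'"
  have T1: "\<bar>rot c s (dot3 a1 a2 a3 x y z) (dot3 b1 b2 b3 x y z) u v - rot c s A B u v\<bar> \<le> kappa"
    unfolding A_def B_def rot_lin_AB dot3_lin
    by (rule Fb[OF cs uv rows SS' k0(1)])
  have dA: "\<bar>A - A'\<bar> \<le> 3 * dl2 * K" unfolding A_def A'_def dot3_lin2
    by (rule dot3_err) (use ea Kx in auto)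
  have dB: "\<bar>B - B'\<bar> \<le> 3 * dl2 * K" unfolding B_def B'_def dot3_lin2
    by (rule dot3_err) (use eb Kx in auto)
  have T2: "\<bar>rot c s A B u v - rot c s A' B' u v\<bar> \<le> 6 * dl2 * K"
    unfolding rot_lin_AB using rot_abs_sum[OF cs uv, of "A - A'" "B - B'"] dA dB by linarith
  have AB: "\<bar>A\<bar> + \<bar>B\<bar> \<le> 142/100 * K"
    apply (rule sum_abs_sq[OF _ K0])
    using bessel[OF rows, of x' y' z'] S' unfolding A_def B_def K_def by linarith
  have uv2: "\<bar>u\<bar> + \<bar>v\<bar> \<le> 142/100 * 1"
    by (rule sum_abs_sq) (use uv in auto)
  have AB': "\<bar>A'\<bar> + \<bar>B'\<bar> \<le> (142/100 + 6 * dl2) * K"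
  proof -
    have "(142/100 + 6 * dl2) * K = 142/100 * K + 3 * dl2 * K + 3 * dl2 * K" by (simp add: algebra_simps)
    then show ?thesis using AB dA dB by linarith
  qed
  have T3: "\<bar>rot c s A' B' u v - rot c' s' A' B' u v\<bar> \<le> 142/100 * (dlt * ((142/100 + 6 * dl2) * K))"
    unfolding rot_lin_cs
    apply (rule order_trans[OF T3_bound[OF ec]])
    apply (rule mult_mono)
    using uv2 AB' by (auto intro!: mult_left_mono simp: dlt_def)
  have num: "kappa + 6 * dl2 * K + 142/100 * (dlt * ((142/100 + 6 * dl2) * K)) \<le> kappa + 18 / 10^11"
    unfolding K_def by (simp add: kappa_def dl2_def dlt_def)
  show ?thesis using T1 T2 T3 num unfolding A'_def B'_def by linarith
qed



lemma RM_eq: "(Rgen sn cs al *v (Mgen sn cs th ph *v S)) \<bullet> w = rot (cs al) (sn al)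
   (dot3 (- sn th) (cs th) 0 (S$1) (S$2) (S$3)) (dot3 (- cs th * cs ph) (- sn th * cs ph) (sn ph) (S$1) (S$2) (S$3)) (w$1) (w$2)"
  unfolding Rgen_def Mgen_def rot_def dot3_def
  by (simp add: inner_vec_def matrix_vector_mult_def sum_2 sum_3 algebra_simps)

lemma R'M_eq: "(R'gen sn cs al *v (Mgen sn cs th ph *v S)) \<bullet> w = rot (- sn al) (cs al)
   (dot3 (- sn th) (cs th) 0 (S$1) (S$2) (S$3)) (dot3 (- cs th * cs ph) (- sn th * cs ph) (sn ph) (S$1) (S$2) (S$3)) (w$1) (w$2)"
  unfolding R'gen_def Mgen_def rot_def dot3_def
  by (simp add: inner_vec_def matrix_vector_mult_def sum_2 sum_3 algebra_simps)

lemma RMT_eq: "(Rgen sn cs al *v (MTgen sn cs th ph *v S)) \<bullet> w = rot (cs al) (sn al)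
   (dot3 (- cs th) (- sn th) 0 (S$1) (S$2) (S$3)) (dot3 (sn th * cs ph) (- cs th * cs ph) 0 (S$1) (S$2) (S$3)) (w$1) (w$2)"
  unfolding Rgen_def MTgen_def rot_def dot3_def
  by (simp add: inner_vec_def matrix_vector_mult_def sum_2 sum_3 algebra_simps)

lemma RMP_eq: "(Rgen sn cs al *v (MPgen sn cs th ph *v S)) \<bullet> w = rot (cs al) (sn al)
   (dot3 0 0 0 (S$1) (S$2) (S$3)) (dot3 (cs th * sn ph) (sn th * sn ph) (cs ph) (S$1) (S$2) (S$3)) (w$1) (w$2)"
  unfolding Rgen_def MPgen_def rot_def dot3_def
  by (simp add: inner_vec_def matrix_vector_mult_def sum_2 sum_3 algebra_simps)

lemma M_eq: "(Mgen sn cs th ph *v S) \<bullet> w = rot 1 0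
   (dot3 (- sn th) (cs th) 0 (S$1) (S$2) (S$3)) (dot3 (- cs th * cs ph) (- sn th * cs ph) (sn ph) (S$1) (S$2) (S$3)) (w$1) (w$2)"
  unfolding Mgen_def rot_def dot3_def
  by (simp add: inner_vec_def matrix_vector_mult_def sum_2 sum_3 algebra_simps)

lemma MT_eq: "(MTgen sn cs th ph *v S) \<bullet> w = rot 1 0
   (dot3 (- cs th) (- sn th) 0 (S$1) (S$2) (S$3)) (dot3 (sn th * cs ph) (- cs th * cs ph) 0 (S$1) (S$2) (S$3)) (w$1) (w$2)"
  unfolding MTgen_def rot_def dot3_def
  by (simp add: inner_vec_def matrix_vector_mult_def sum_2 sum_3 algebra_simps)

lemma MP_eq: "(MPgen sn cs th ph *v S) \<bullet> w = rot 1 0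
   (dot3 0 0 0 (S$1) (S$2) (S$3)) (dot3 (cs th * sn ph) (sn th * sn ph) (cs ph) (S$1) (S$2) (S$3)) (w$1) (w$2)"
  unfolding MPgen_def rot_def dot3_def
  by (simp add: inner_vec_def matrix_vector_mult_def sum_2 sum_3 algebra_simps)

lemma norm3: "norm (S::real^3) = sqrt ((S$1)\<^sup>2 + (S$2)\<^sup>2 + (S$3)\<^sup>2)"
  by (simp add: norm_vec_def L2_set_def sum_3)

lemma norm2: "norm (S::real^2) = sqrt ((S$1)\<^sup>2 + (S$2)\<^sup>2)"
  by (simp add: norm_vec_def L2_set_def sum_2)



lemma taylor2:
  fixes f f1 f2 :: "real \<Rightarrow> real"
  assumes "\<And>t. DERIV f t :> f1 t" "\<And>t. DERIV f1 t :> f2 t" "\<And>t. 0 \<le> t \<Longrightarrow> t \<le> 1 \<Longrightarrow> \<bar>f2 t\<bar> \<le> K"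
  shows "\<bar>f 1 - f 0 - f1 0\<bar> \<le> K / 2"
proof -
  define diff where "diff = (\<lambda>m::nat. if m = 0 then f else if m = 1 then f1 else f2)"
  have "\<exists>t::real. 0 < t \<and> t < 1 \<and>
      f 1 = sum (\<lambda>m. (diff m 0 / fact m) * 1 ^ m) {..<2} + (diff 2 t / fact 2) * 1 ^ 2"
    by (rule Maclaurin) (use assms in \<open>auto simp: diff_def\<close>)
  then obtain t where t: "0 < t" "t < 1" "f 1 = f 0 + f1 0 + f2 t / 2"
    by (auto simp: diff_def numeral_2_eq_2)
  have "\<bar>f2 t\<bar> \<le> K" using assms(3) t by auto
  then show ?thesis using t by simp
qed

definition Gf where
  "Gf x y z u v al th ph = rot (cos al) (sin al)
     (dot3 (- sin th) (cos th) 0 x y z) (dot3 (- cos th * cos ph) (- sin th * cos ph) (sin ph) x y z) u v"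

definition G1 where
  "G1 x y z u v ha ht hp al th ph =
     ha * rot (- sin al) (cos al)
       (dot3 (- sin th) (cos th) 0 x y z) (dot3 (- cos th * cos ph) (- sin th * cos ph) (sin ph) x y z) u v
   + ht * rot (cos al) (sin al)
       (dot3 (- cos th) (- sin th) 0 x y z) (dot3 (sin th * cos ph) (- cos th * cos ph) 0 x y z) u v
   + hp * rot (cos al) (sin al)
       (dot3 0 0 0 x y z) (dot3 (cos th * sin ph) (sin th * sin ph) (cos ph) x y z) u v"

definition G2 where
  "G2 x y z u v ha ht hp al th ph =
     ha * ha * rot (- cos al) (- sin al)
       (dot3 (- sin th) (cos th) 0 x y z) (dot3 (- cos th * cos ph) (- sin th * cos ph) (sin ph) x y z) u v
   + 2 * ha * ht * rot (- sin al) (cos al)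
       (dot3 (- cos th) (- sin th) 0 x y z) (dot3 (sin th * cos ph) (- cos th * cos ph) 0 x y z) u v
   + 2 * ha * hp * rot (- sin al) (cos al)
       (dot3 0 0 0 x y z) (dot3 (cos th * sin ph) (sin th * sin ph) (cos ph) x y z) u v
   + ht * ht * rot (cos al) (sin al)
       (dot3 (sin th) (- cos th) 0 x y z) (dot3 (cos th * cos ph) (sin th * cos ph) 0 x y z) u v
   + 2 * ht * hp * rot (cos al) (sin al)
       (dot3 0 0 0 x y z) (dot3 (- sin th * sin ph) (cos th * sin ph) 0 x y z) u v
   + hp * hp * rot (cos al) (sin al)
       (dot3 0 0 0 x y z) (dot3 (cos th * cos ph) (sin th * cos ph) (- sin ph) x y z) u v"

lemma G_deriv1:
  "DERIV (\<lambda>t. Gf x y z u v (al + t * ha) (th + t * ht) (ph + t * hp)) t :>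
     G1 x y z u v ha ht hp (al + t * ha) (th + t * ht) (ph + t * hp)"
  unfolding Gf_def G1_def rot_def dot3_def
  apply (rule derivative_eq_intros refl | simp)+
  apply (simp add: algebra_simps)
  done

lemma G_deriv2:
  "DERIV (\<lambda>t. G1 x y z u v ha ht hp (al + t * ha) (th + t * ht) (ph + t * hp)) t :>
     G2 x y z u v ha ht hp (al + t * ha) (th + t * ht) (ph + t * hp)"
  unfolding G1_def G2_def rot_def dot3_def
  apply (rule derivative_eq_intros refl | simp)+
  apply (simp add: algebra_simps)
  done

lemma cs_sq: "(cos a * c)\<^sup>2 + (sin a * c)\<^sup>2 = (c::real)\<^sup>2"
proof -
  have "(cos a * c)\<^sup>2 + (sin a * c)\<^sup>2 = c\<^sup>2 * (cos a)\<^sup>2 + c\<^sup>2 * (sin a)\<^sup>2"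
    unfolding power_mult_distrib by (simp add: mult.commute)
  also have "\<dots> = c\<^sup>2 * ((sin a)\<^sup>2 + (cos a)\<^sup>2)" by (simp only: distrib_left add.commute)
  also have "\<dots> = c\<^sup>2" by simp
  finally show ?thesis .
qed

lemma sin_sq_le: "(sin (a::real))\<^sup>2 \<le> 1"
  using sin_cos_squared_add[of a] zero_le_power2[of "cos a"] by linarith
lemma cos_sq_le: "(cos (a::real))\<^sup>2 \<le> 1"
  using sin_cos_squared_add[of a] zero_le_power2[of "sin a"] by linarith

lemma cs_sq_le: "(cos a * c)\<^sup>2 + (sin a * c)\<^sup>2 \<le> 1" if "c = cos (b::real) \<or> c = sin b"
  using that cs_sq[of a c] sin_sq_le cos_sq_le by auto

lemma rot_unit:
  assumes "x\<^sup>2 + y\<^sup>2 + z\<^sup>2 \<le> 1" "u\<^sup>2 + v\<^sup>2 \<le> 1"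
  shows
  "\<bar>rot (- cos al) (- sin al)
       (dot3 (- sin th) (cos th) 0 x y z) (dot3 (- cos th * cos ph) (- sin th * cos ph) (sin ph) x y z) u v\<bar> \<le> 1"
  "\<bar>rot (- sin al) (cos al)
       (dot3 (- sin th) (cos th) 0 x y z) (dot3 (- cos th * cos ph) (- sin th * cos ph) (sin ph) x y z) u v\<bar> \<le> 1"
  "\<bar>rot (cos al) (sin al)
       (dot3 (- sin th) (cos th) 0 x y z) (dot3 (- cos th * cos ph) (- sin th * cos ph) (sin ph) x y z) u v\<bar> \<le> 1"
  "\<bar>rot (- sin al) (cos al)
       (dot3 (- cos th) (- sin th) 0 x y z) (dot3 (sin th * cos ph) (- cos th * cos ph) 0 x y z) u v\<bar> \<le> 1"
  "\<bar>rot (cos al) (sin al)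
       (dot3 (- cos th) (- sin th) 0 x y z) (dot3 (sin th * cos ph) (- cos th * cos ph) 0 x y z) u v\<bar> \<le> 1"
  "\<bar>rot (- sin al) (cos al)
       (dot3 0 0 0 x y z) (dot3 (cos th * sin ph) (sin th * sin ph) (cos ph) x y z) u v\<bar> \<le> 1"
  "\<bar>rot (cos al) (sin al)
       (dot3 0 0 0 x y z) (dot3 (cos th * sin ph) (sin th * sin ph) (cos ph) x y z) u v\<bar> \<le> 1"
  "\<bar>rot (cos al) (sin al)
       (dot3 (sin th) (- cos th) 0 x y z) (dot3 (cos th * cos ph) (sin th * cos ph) 0 x y z) u v\<bar> \<le> 1"
  "\<bar>rot (cos al) (sin al)
       (dot3 0 0 0 x y z) (dot3 (- sin th * sin ph) (cos th * sin ph) 0 x y z) u v\<bar> \<le> 1"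
  "\<bar>rot (cos al) (sin al)
       (dot3 0 0 0 x y z) (dot3 (cos th * cos ph) (sin th * cos ph) (- sin ph) x y z) u v\<bar> \<le> 1"
proof -
  have S: "x\<^sup>2 + y\<^sup>2 + z\<^sup>2 \<le> 1\<^sup>2" using assms(1) by simp
  note F = Fb[OF _ assms(2) _ _ _ S]
  have b1: "(cos th * cos ph)\<^sup>2 + (sin th * cos ph)\<^sup>2 + (sin ph)\<^sup>2 = 1"
    using cs_sq[of th "cos ph"] by simp
  have b2: "(cos th * sin ph)\<^sup>2 + (sin th * sin ph)\<^sup>2 + (cos ph)\<^sup>2 = 1"
    using cs_sq[of th "sin ph"] by simp
  have b3: "(cos th * cos ph)\<^sup>2 + (sin th * cos ph)\<^sup>2 \<le> 1" by (rule cs_sq_le) auto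
  have b4: "(cos th * sin ph)\<^sup>2 + (sin th * sin ph)\<^sup>2 \<le> 1" by (rule cs_sq_le) auto
  have b4': "(sin th * sin ph)\<^sup>2 + (cos th * sin ph)\<^sup>2 \<le> 1" using b4 by simp
  show "\<bar>rot (- cos al) (- sin al)
       (dot3 (- sin th) (cos th) 0 x y z) (dot3 (- cos th * cos ph) (- sin th * cos ph) (sin ph) x y z) u v\<bar> \<le> 1"
    apply (rule F)
    apply simp
    apply (simp add: algebra_simps)
    apply simp
    using b1 apply (simp add: add.commute)
    apply simp
    done
  show "\<bar>rot (- sin al) (cos al)
       (dot3 (- sin th) (cos th) 0 x y z) (dot3 (- cos th * cos ph) (- sin th * cos ph) (sin ph) x y z) u v\<bar> \<le> 1"
    apply (rule F)
    apply simp
    apply (simp add: algebra_simps)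
    apply simp
    using b1 apply (simp add: add.commute)
    apply simp
    done
  show "\<bar>rot (cos al) (sin al)
       (dot3 (- sin th) (cos th) 0 x y z) (dot3 (- cos th * cos ph) (- sin th * cos ph) (sin ph) x y z) u v\<bar> \<le> 1"
    apply (rule F)
    apply simp
    apply (simp add: algebra_simps)
    apply simp
    using b1 apply (simp add: add.commute)
    apply simp
    done
  show "\<bar>rot (- sin al) (cos al)
       (dot3 (- cos th) (- sin th) 0 x y z) (dot3 (sin th * cos ph) (- cos th * cos ph) 0 x y z) u v\<bar> \<le> 1"
    apply (rule F)
    apply simp
    apply (simp add: algebra_simps)
    apply simp
    using b3 apply (simp add: add.commute)
    apply simp
    done
  show "\<bar>rot (cos al) (sin al)
       (dot3 (- cos th) (- sin th) 0 x y z) (dot3 (sin th * cos ph) (- cos th * cos ph) 0 x y z) u v\<bar> \<le> 1"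
    apply (rule F)
    apply simp
    apply (simp add: algebra_simps)
    apply simp
    using b3 apply (simp add: add.commute)
    apply simp
    done
  show "\<bar>rot (- sin al) (cos al)
       (dot3 0 0 0 x y z) (dot3 (cos th * sin ph) (sin th * sin ph) (cos ph) x y z) u v\<bar> \<le> 1"
    apply (rule F)
    apply simp
    apply (simp add: algebra_simps)
    apply simp
    using b2 apply (simp add: add.commute)
    apply simp
    done
  show "\<bar>rot (cos al) (sin al)
       (dot3 0 0 0 x y z) (dot3 (cos th * sin ph) (sin th * sin ph) (cos ph) x y z) u v\<bar> \<le> 1"
    apply (rule F)
    apply simp
    apply (simp add: algebra_simps)
    apply simp
    using b2 apply (simp add: add.commute)
    apply simp
    done
  show "\<bar>rot (cos al) (sin al)
       (dot3 (sin th) (- cos th) 0 x y z) (dot3 (cos th * cos ph) (sin th * cos ph) 0 x y z) u v\<bar> \<le> 1"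
    apply (rule F)
    apply simp
    apply (simp add: algebra_simps)
    apply simp
    using b3 apply (simp add: add.commute)
    apply simp
    done
  show "\<bar>rot (cos al) (sin al)
       (dot3 0 0 0 x y z) (dot3 (- sin th * sin ph) (cos th * sin ph) 0 x y z) u v\<bar> \<le> 1"
    apply (rule F)
    apply simp
    apply (simp add: algebra_simps)
    apply simp
    using b4' apply (simp add: add.commute)
    apply simp
    done
  show "\<bar>rot (cos al) (sin al)
       (dot3 0 0 0 x y z) (dot3 (cos th * cos ph) (sin th * cos ph) (- sin ph) x y z) u v\<bar> \<le> 1"
    apply (rule F)
    apply simp
    apply (simp add: algebra_simps)
    apply simp
    using b1 apply (simp add: add.commute)
    apply simp
    done
qed


lemma term_b1: "\<bar>r\<bar> \<le> 1 \<Longrightarrow> \<bar>p * p * r\<bar> \<le> \<bar>p\<bar> * \<bar>p\<bar>" for p r :: real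
  unfolding abs_mult by (rule mult_left_le) auto
lemma term_b2: "\<bar>r\<bar> \<le> 1 \<Longrightarrow> \<bar>2 * p * q * r\<bar> \<le> 2 * (\<bar>p\<bar> * \<bar>q\<bar>)" for p q r :: real
proof -
  assume r: "\<bar>r\<bar> \<le> 1"
  have "(2 * \<bar>p\<bar> * \<bar>q\<bar>) * \<bar>r\<bar> \<le> (2 * \<bar>p\<bar> * \<bar>q\<bar>) * 1"
    by (rule mult_left_mono[OF r]) simp
  then show ?thesis by (simp add: abs_mult mult.assoc)
qed

lemma six: fixes a1 a2 a3 a4 a5 a6 :: real
  shows "\<bar>a1\<bar> \<le> b1 \<Longrightarrow> \<bar>a2\<bar> \<le> b2 \<Longrightarrow> \<bar>a3\<bar> \<le> b3 \<Longrightarrow> \<bar>a4\<bar> \<le> b4 \<Longrightarrow> \<bar>a5\<bar> \<le> b5 \<Longrightarrow> \<bar>a6\<bar> \<le> b6 \<Longrightarrow>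
    \<bar>a1 + a2 + a3 + a4 + a5 + a6\<bar> \<le> b1 + b2 + b3 + b4 + b5 + b6"
  by linarith

lemma G2_bound:
  assumes "x\<^sup>2 + y\<^sup>2 + z\<^sup>2 \<le> 1" "u\<^sup>2 + v\<^sup>2 \<le> 1"
  shows "\<bar>G2 x y z u v ha ht hp al th ph\<bar> \<le> (\<bar>ha\<bar> + \<bar>ht\<bar> + \<bar>hp\<bar>)\<^sup>2"
proof -
  note R = rot_unit[OF assms, of al th ph]
  note t1 = term_b1[OF R(1), of ha] term_b2[OF R(4), of ha ht] term_b2[OF R(6), of ha hp]
    term_b1[OF R(8), of ht] term_b2[OF R(9), of ht hp] term_b1[OF R(10), of hp]
  have sq: "(\<bar>ha\<bar> + \<bar>ht\<bar> + \<bar>hp\<bar>)\<^sup>2 = \<bar>ha\<bar> * \<bar>ha\<bar> + 2 * (\<bar>ha\<bar> * \<bar>ht\<bar>) + 2 * (\<bar>ha\<bar> * \<bar>hp\<bar>)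
     + \<bar>ht\<bar> * \<bar>ht\<bar> + 2 * (\<bar>ht\<bar> * \<bar>hp\<bar>) + \<bar>hp\<bar> * \<bar>hp\<bar>"
    by (simp add: power2_eq_square algebra_simps)
  show ?thesis unfolding G2_def sq by (rule six[OF t1])
qed

lemma G_taylor:
  assumes "x\<^sup>2 + y\<^sup>2 + z\<^sup>2 \<le> 1" "u\<^sup>2 + v\<^sup>2 \<le> 1"
  shows "\<bar>Gf x y z u v (al + ha) (th + ht) (ph + hp) - Gf x y z u v al th ph
           - G1 x y z u v ha ht hp al th ph\<bar> \<le> (\<bar>ha\<bar> + \<bar>ht\<bar> + \<bar>hp\<bar>)\<^sup>2 / 2"
  using taylor2[of "\<lambda>t. Gf x y z u v (al + t*ha) (th + t*ht) (ph + t*hp)"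
      "\<lambda>t. G1 x y z u v ha ht hp (al + t*ha) (th + t*ht) (ph + t*hp)"
      "\<lambda>t. G2 x y z u v ha ht hp (al + t*ha) (th + t*ht) (ph + t*hp)" "(\<bar>ha\<bar> + \<bar>ht\<bar> + \<bar>hp\<bar>)\<^sup>2"]
    G_deriv1 G_deriv2 G2_bound[OF assms] by simp



lemma dlt_eq: "dltA = dlt" by (simp add: dltA_def dlt_def)

lemma sE: "\<bar>t\<bar> \<le> 4 \<Longrightarrow> \<bar>sin t - sinQ t\<bar> \<le> dlt" using sinQ_err dlt_eq by simp
lemma cE: "\<bar>t\<bar> \<le> 4 \<Longrightarrow> \<bar>cos t - cosQ t\<bar> \<le> dlt" using cosQ_err dlt_eq by simp

lemma L1: "\<bar>a - a'\<bar> \<le> dlt \<Longrightarrow> \<bar>a - a'\<bar> \<le> dl2"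
  by (simp add: dlt_def dl2_def)
lemma L2: "\<bar>a - a'\<bar> \<le> dlt \<Longrightarrow> \<bar>- a - - a'\<bar> \<le> dl2"
  for a a' :: real by (simp add: dlt_def dl2_def abs_minus_commute)
lemma L3: "\<bar>0 - 0\<bar> \<le> (dl2::real)"
  by (simp add: dl2_def)
lemma L4:
  fixes a b a' b' :: real
  assumes "\<bar>a - a'\<bar> \<le> dlt" "\<bar>b - b'\<bar> \<le> dlt" "\<bar>a\<bar> \<le> 1" "\<bar>b\<bar> \<le> 1"
  shows "\<bar>a * b - a' * b'\<bar> \<le> dl2"
proof -
  have e: "a * b - a' * b' = (a - a') * b + a' * (b - b')" by (simp add: algebra_simps)
  have a': "\<bar>a'\<bar> \<le> 1 + dlt" using assms by linarith
  have 1: "\<bar>(a - a') * b\<bar> \<le> dlt * 1" unfolding abs_mult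
    by (rule mult_mono) (use assms in auto)
  have 2: "\<bar>a' * (b - b')\<bar> \<le> (1 + dlt) * dlt" unfolding abs_mult
    by (rule mult_mono) (use assms a' in \<open>auto simp: dlt_def\<close>)
  have "dlt * 1 + (1 + dlt) * dlt \<le> dl2" by (simp add: dlt_def dl2_def)
  then show ?thesis unfolding e using 1 2 abs_triangle_ineq[of "(a - a') * b" "a' * (b - b')"] by linarith
qed
lemma L5:
  fixes a b a' b' :: real
  assumes "\<bar>a - a'\<bar> \<le> dlt" "\<bar>b - b'\<bar> \<le> dlt" "\<bar>a\<bar> \<le> 1" "\<bar>b\<bar> \<le> 1"
  shows "\<bar>- a * b - - a' * b'\<bar> \<le> dl2"
  using L4[OF assms] by (simp add: abs_minus_commute)
lemma L6: "\<bar>a - a'\<bar> \<le> dlt \<Longrightarrow> \<bar>- a - - a'\<bar> \<le> dlt"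
  for a a' :: real by (simp add: abs_minus_commute)
lemma L7: "\<bar>1 - 1\<bar> \<le> dlt" "\<bar>0 - 0\<bar> \<le> dlt"
  by (simp_all add: dlt_def)

lemma rowsM:
  fixes th ph :: real
  shows
  "(- sin th) * (- cos th * cos ph) + cos th * (- sin th * cos ph) + 0 * sin ph = 0"
  "(- sin th)\<^sup>2 + (cos th)\<^sup>2 + 0\<^sup>2 \<le> 1"
  "(- cos th * cos ph)\<^sup>2 + (- sin th * cos ph)\<^sup>2 + (sin ph)\<^sup>2 \<le> 1"
  using cs_sq[of th "cos ph"] by (simp_all add: algebra_simps)
lemma rowsMT:
  fixes th ph :: real
  shows
  "(- cos th) * (sin th * cos ph) + (- sin th) * (- cos th * cos ph) + 0 * 0 = 0"
  "(- cos th)\<^sup>2 + (- sin th)\<^sup>2 + 0\<^sup>2 \<le> 1"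
  "(sin th * cos ph)\<^sup>2 + (- cos th * cos ph)\<^sup>2 + 0\<^sup>2 \<le> 1"
  using cs_sq_le[of "cos ph" ph th] by (simp_all add: algebra_simps)
lemma rowsMP:
  fixes th ph :: real
  shows
  "0 * (cos th * sin ph) + 0 * (sin th * sin ph) + 0 * cos ph = 0"
  "0\<^sup>2 + 0\<^sup>2 + 0\<^sup>2 \<le> (1::real)"
  "(cos th * sin ph)\<^sup>2 + (sin th * sin ph)\<^sup>2 + (cos ph)\<^sup>2 \<le> 1"
  using cs_sq[of th "sin ph"] by (simp_all add: algebra_simps)

lemma bd: "\<bar>sin (t::real)\<bar> \<le> 1" "\<bar>cos (t::real)\<bar> \<le> 1" by simp_all

context
  fixes S St :: "real^3" and w :: "real^2" and al th ph :: real
  assumes al: "\<bar>al\<bar> \<le> 4" and th: "\<bar>th\<bar> \<le> 4" and ph: "\<bar>ph\<bar> \<le> 4"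
    and uv: "(w$1)\<^sup>2 + (w$2)\<^sup>2 \<le> 1"
    and S': "(St$1)\<^sup>2 + (St$2)\<^sup>2 + (St$3)\<^sup>2 \<le> (1 + kappa)\<^sup>2"
    and SS': "(S$1 - St$1)\<^sup>2 + (S$2 - St$2)\<^sup>2 + (S$3 - St$3)\<^sup>2 \<le> kappa\<^sup>2"
begin

lemma apx_RM: "\<bar>(Rm al *v (Mm th ph *v S)) \<bullet> w - (RQ al *v (MQ th ph *v St)) \<bullet> w\<bar> \<le> kappa + 18 / 10^11"
  unfolding RM_eq
  by (rule approx[OF sin_cos_squared_add2 uv rowsM cE[OF al] sE[OF al]
     L2[OF sE[OF th]] L1[OF cE[OF th]] L3 L5[OF cE[OF th] cE[OF ph] bd(2) bd(2)]
     L5[OF sE[OF th] cE[OF ph] bd(1) bd(2)] L1[OF sE[OF ph]] S' SS'])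

lemma apx_R'M: "\<bar>(R'gen sin cos al *v (Mm th ph *v S)) \<bullet> w - (R'Q al *v (MQ th ph *v St)) \<bullet> w\<bar> \<le> kappa + 18 / 10^11"
  unfolding R'M_eq
  by (rule approx[OF _ uv rowsM L6[OF sE[OF al]] cE[OF al]
     L2[OF sE[OF th]] L1[OF cE[OF th]] L3 L5[OF cE[OF th] cE[OF ph] bd(2) bd(2)]
     L5[OF sE[OF th] cE[OF ph] bd(1) bd(2)] L1[OF sE[OF ph]] S' SS']) simp

lemma apx_RMT: "\<bar>(Rm al *v (MTgen sin cos th ph *v S)) \<bullet> w - (RQ al *v (MTQ th ph *v St)) \<bullet> w\<bar> \<le> kappa + 18 / 10^11"
  unfolding RMT_eq
  by (rule approx[OF sin_cos_squared_add2 uv rowsMT cE[OF al] sE[OF al]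
     L2[OF cE[OF th]] L2[OF sE[OF th]] L3 L4[OF sE[OF th] cE[OF ph] bd(1) bd(2)]
     L5[OF cE[OF th] cE[OF ph] bd(2) bd(2)] L3 S' SS'])

lemma apx_RMP: "\<bar>(Rm al *v (MPgen sin cos th ph *v S)) \<bullet> w - (RQ al *v (MPQ th ph *v St)) \<bullet> w\<bar> \<le> kappa + 18 / 10^11"
  unfolding RMP_eq
  by (rule approx[OF sin_cos_squared_add2 uv rowsMP cE[OF al] sE[OF al]
     L3 L3 L3 L4[OF cE[OF th] sE[OF ph] bd(2) bd(1)]
     L4[OF sE[OF th] sE[OF ph] bd(1) bd(1)] L1[OF cE[OF ph]] S' SS'])

lemma apx_M: "\<bar>(Mm th ph *v S) \<bullet> w - (MQ th ph *v St) \<bullet> w\<bar> \<le> kappa + 18 / 10^11"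
  unfolding M_eq
  by (rule approx[OF _ uv rowsM L7
     L2[OF sE[OF th]] L1[OF cE[OF th]] L3 L5[OF cE[OF th] cE[OF ph] bd(2) bd(2)]
     L5[OF sE[OF th] cE[OF ph] bd(1) bd(2)] L1[OF sE[OF ph]] S' SS']) simp

lemma apx_MT: "\<bar>(MTgen sin cos th ph *v S) \<bullet> w - (MTQ th ph *v St) \<bullet> w\<bar> \<le> kappa + 18 / 10^11"
  unfolding MT_eq
  by (rule approx[OF _ uv rowsMT L7
     L2[OF cE[OF th]] L2[OF sE[OF th]] L3 L4[OF sE[OF th] cE[OF ph] bd(1) bd(2)]
     L5[OF cE[OF th] cE[OF ph] bd(2) bd(2)] L3 S' SS']) simp

lemma apx_MP: "\<bar>(MPgen sin cos th ph *v S) \<bullet> w - (MPQ th ph *v St) \<bullet> w\<bar> \<le> kappa + 18 / 10^11"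
  unfolding MP_eq
  by (rule approx[OF _ uv rowsMP L7
     L3 L3 L3 L4[OF cE[OF th] sE[OF ph] bd(2) bd(1)]
     L4[OF sE[OF th] sE[OF ph] bd(1) bd(1)] L1[OF cE[OF ph]] S' SS']) simp

end



lemma interior_hull_max:
  fixes y w :: "real^2" and g :: "real^3 \<Rightarrow> real^2"
  assumes y: "y \<in> interior (convex hull (g ` P))" and w: "w \<noteq> 0"
  shows "\<exists>p\<in>P. y \<bullet> w < g p \<bullet> w"
proof (rule ccontr)
  assume "\<not> (\<exists>p\<in>P. y \<bullet> w < g p \<bullet> w)"
  then have "g ` P \<subseteq> {z. inner w z \<le> y \<bullet> w}" by (auto simp: inner_commute not_less)
  then have H: "convex hull (g ` P) \<subseteq> {z. inner w z \<le> y \<bullet> w}"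
    by (rule hull_minimal) (rule convex_halfspace_le)
  obtain e where e: "e > 0" "ball y e \<subseteq> convex hull (g ` P)" using y mem_interior by blast
  define z where "z = y + (e / 2 / norm w) *\<^sub>R w"
  have nw: "norm w > 0" using w by simp
  have "dist y z = e / 2" unfolding z_def dist_norm using nw e by simp
  then have "z \<in> ball y e" using e by simp
  then have "inner w z \<le> y \<bullet> w" using e H by blast
  moreover have "inner w z = y \<bullet> w + e / 2 * norm w"
    unfolding z_def using nw by (simp add: inner_add_right inner_commute power2_norm_eq_inner[symmetric] power2_eq_square)
  moreover have "e / 2 * norm w > 0" using e nw by simp
  ultimately show False by linarith
qed

lemma norm3sq: "(norm (S::real^3))\<^sup>2 = (S$1)\<^sup>2 + (S$2)\<^sup>2 + (S$3)\<^sup>2"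
  unfolding norm3 by simp

lemma vec_conds:
  fixes S St :: "real^3"
  assumes "norm S \<le> 1" "norm (S - St) \<le> kappa"
  shows "(S$1)\<^sup>2 + (S$2)\<^sup>2 + (S$3)\<^sup>2 \<le> 1"
    "(St$1)\<^sup>2 + (St$2)\<^sup>2 + (St$3)\<^sup>2 \<le> (1 + kappa)\<^sup>2"
    "(S$1 - St$1)\<^sup>2 + (S$2 - St$2)\<^sup>2 + (S$3 - St$3)\<^sup>2 \<le> kappa\<^sup>2"
proof -
  have "(norm S)\<^sup>2 \<le> 1\<^sup>2" using assms(1) by (intro power_mono) auto
  then show "(S$1)\<^sup>2 + (S$2)\<^sup>2 + (S$3)\<^sup>2 \<le> 1" unfolding norm3sq by simp
  have "norm St \<le> norm S + norm (S - St)" using norm_triangle_ineq4[of S "S - St"] by simp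
  then have "norm St \<le> 1 + kappa" using assms by linarith
  then have "(norm St)\<^sup>2 \<le> (1 + kappa)\<^sup>2" by (intro power_mono) auto
  then show "(St$1)\<^sup>2 + (St$2)\<^sup>2 + (St$3)\<^sup>2 \<le> (1 + kappa)\<^sup>2" unfolding norm3sq .
  have "(norm (S - St))\<^sup>2 \<le> kappa\<^sup>2" using assms(2) by (intro power_mono) auto
  then show "(S$1 - St$1)\<^sup>2 + (S$2 - St$2)\<^sup>2 + (S$3 - St$3)\<^sup>2 \<le> kappa\<^sup>2" unfolding norm3sq by simp
qed



lemma Gf_eq: "Gf (S$1) (S$2) (S$3) (w$1) (w$2) al th ph = (Rm al *v (Mm th ph *v S)) \<bullet> w"
  by (simp add: Gf_def RM_eq)
lemma G1_eq: "G1 (S$1) (S$2) (S$3) (w$1) (w$2) ha ht hp al th ph =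
   ha * ((R'gen sin cos al *v (Mm th ph *v S)) \<bullet> w) + ht * ((Rm al *v (MTgen sin cos th ph *v S)) \<bullet> w)
   + hp * ((Rm al *v (MPgen sin cos th ph *v S)) \<bullet> w)"
  by (simp add: G1_def R'M_eq RMT_eq RMP_eq)
lemma Gf0_eq: "Gf (S$1) (S$2) (S$3) (w$1) (w$2) 0 th ph = (Mm th ph *v S) \<bullet> w"
  by (simp add: Gf_def M_eq)
lemma G10_eq: "G1 (S$1) (S$2) (S$3) (w$1) (w$2) 0 ht hp 0 th ph =
   ht * ((MTgen sin cos th ph *v S) \<bullet> w) + hp * ((MPgen sin cos th ph *v S) \<bullet> w)"
  by (simp add: G1_def MT_eq MP_eq)

lemma eps_abs: "\<bar>h\<bar> \<le> e \<Longrightarrow> \<bar>G - Q\<bar> \<le> D \<Longrightarrow> \<bar>h * G\<bar> \<le> e * \<bar>Q\<bar> + e * D" for h e G Q D :: real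
proof -
  assume h: "\<bar>h\<bar> \<le> e" and g: "\<bar>G - Q\<bar> \<le> D"
  have "\<bar>h * G\<bar> \<le> e * \<bar>G\<bar>" unfolding abs_mult by (rule mult_right_mono[OF h]) simp
  also have "\<dots> \<le> e * (\<bar>Q\<bar> + D)" using h g by (intro mult_left_mono) auto
  finally show ?thesis by (simp add: algebra_simps)
qed

lemma absD: "\<bar>x\<bar> \<le> b \<Longrightarrow> - b \<le> x \<and> x \<le> b" for x b :: real by linarith

lemma lowL_lin:
  fixes L G0 X1 X2 X3 T Q0 qa qt qp e D k :: real
  assumes "- (T / 2) \<le> L - G0 - (X1 + X2 + X3)" "T \<le> (3 * e)\<^sup>2" "(3 * e)\<^sup>2 / 2 = 9/2 * e^2"
    "- D \<le> G0 - Q0"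
    "- (e * qa + e * D) \<le> X1" "- (e * qt + e * D) \<le> X2" "- (e * qp + e * D) \<le> X3"
    "e * D \<le> e * (4 * k)" "D \<le> 4 * k" "4 * k * (1 + 3 * e) = 4 * k + 3 * (e * (4 * k))"
    "e * (qa + qt + qp) = e * qa + e * qt + e * qp"
  shows "Q0 - e * (qa + qt + qp) - 9/2 * e^2 - 4 * k * (1 + 3 * e) \<le> L"
  using assms by linarith

lemma upR_lin:
  fixes R H0 X2 X3 T K0 qt qp e D k :: real
  assumes "R - H0 - (X2 + X3) \<le> T / 2" "T \<le> (2 * e)\<^sup>2" "(2 * e)\<^sup>2 / 2 = 2 * e^2"
    "H0 - K0 \<le> D"
    "X2 \<le> e * qt + e * D" "X3 \<le> e * qp + e * D"
    "e * D \<le> e * (3 * k)" "D \<le> 3 * k" "3 * k * (1 + 2 * e) = 3 * k + 2 * (e * (3 * k))"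
    "e * (qt + qp) = e * qt + e * qp"
  shows "R \<le> K0 + e * (qt + qp) + 2 * e^2 + 3 * k * (1 + 2 * e)"
  using assms by linarith

theorem theorem6p7:
  fixes P Pt :: "(real^3) set" and St :: "real^3" and w :: "real^2"
    and \<epsilon> t1 p1 t2 p2 a :: real
  assumes "polyhedron P" and "pointsymmetric P" and "radius_one P"
    and "kappa_rat_approx P Pt" and "St \<in> Pt"
    and "\<epsilon> > 0"
    and "t1 \<in> \<rat>" "p1 \<in> \<rat>" "t2 \<in> \<rat>" "p2 \<in> \<rat>" "a \<in> \<rat>"
    and "\<bar>t1\<bar> \<le> 4" "\<bar>p1\<bar> \<le> 4" "\<bar>t2\<bar> \<le> 4" "\<bar>p2\<bar> \<le> 4" "\<bar>a\<bar> \<le> 4"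
    and "rat_vec w" and "norm w = 1"
    and "(RQ a *v (MQ t1 p1 *v St)) \<bullet> w
          - \<epsilon> * (\<bar>(R'Q a *v (MQ t1 p1 *v St)) \<bullet> w\<bar>
                 + \<bar>(RQ a *v (MTQ t1 p1 *v St)) \<bullet> w\<bar>
                 + \<bar>(RQ a *v (MPQ t1 p1 *v St)) \<bullet> w\<bar>)
          - 9/2 * \<epsilon>^2 - 4 * kappa * (1 + 3 * \<epsilon>)
        > Max ((\<lambda>Q. (MQ t2 p2 *v Q) \<bullet> w
               + \<epsilon> * (\<bar>(MTQ t2 p2 *v Q) \<bullet> w\<bar> + \<bar>(MPQ t2 p2 *v Q) \<bullet> w\<bar>)
               + 2 * \<epsilon>^2 + 3 * kappa * (1 + 2 * \<epsilon>)) ` Pt)"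
  shows "\<not> (\<exists>\<theta>1 \<phi>1 \<theta>2 \<phi>2 \<alpha>.
            \<bar>\<theta>1 - t1\<bar> \<le> \<epsilon> \<and> \<bar>\<phi>1 - p1\<bar> \<le> \<epsilon> \<and>
            \<bar>\<theta>2 - t2\<bar> \<le> \<epsilon> \<and> \<bar>\<phi>2 - p2\<bar> \<le> \<epsilon> \<and> \<bar>\<alpha> - a\<bar> \<le> \<epsilon> \<and>
            (\<lambda>x. Rm \<alpha> *v (Mm \<theta>1 \<phi>1 *v x)) ` P
              \<subseteq> interior (convex hull ((\<lambda>x. Mm \<theta>2 \<phi>2 *v x) ` P)))"
proof
  assume "\<exists>\<theta>1 \<phi>1 \<theta>2 \<phi>2 \<alpha>.
            \<bar>\<theta>1 - t1\<bar> \<le> \<epsilon> \<and> \<bar>\<phi>1 - p1\<bar> \<le> \<epsilon> \<and>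
            \<bar>\<theta>2 - t2\<bar> \<le> \<epsilon> \<and> \<bar>\<phi>2 - p2\<bar> \<le> \<epsilon> \<and> \<bar>\<alpha> - a\<bar> \<le> \<epsilon> \<and>
            (\<lambda>x. Rm \<alpha> *v (Mm \<theta>1 \<phi>1 *v x)) ` P
              \<subseteq> interior (convex hull ((\<lambda>x. Mm \<theta>2 \<phi>2 *v x) ` P))"
  then obtain \<theta>1 \<phi>1 \<theta>2 \<phi>2 \<alpha> where
    b1: "\<bar>\<theta>1 - t1\<bar> \<le> \<epsilon>" and b2: "\<bar>\<phi>1 - p1\<bar> \<le> \<epsilon>" and b3: "\<bar>\<theta>2 - t2\<bar> \<le> \<epsilon>"
    and b4: "\<bar>\<phi>2 - p2\<bar> \<le> \<epsilon>" and b5: "\<bar>\<alpha> - a\<bar> \<le> \<epsilon>"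
    and sub: "(\<lambda>x. Rm \<alpha> *v (Mm \<theta>1 \<phi>1 *v x)) ` P \<subseteq> interior (convex hull ((\<lambda>x. Mm \<theta>2 \<phi>2 *v x) ` P))"
    by blast
  from assms(4) obtain f where Pt: "Pt = f ` P" and fP: "\<forall>p\<in>P. rat_vec (f p) \<and> norm (p - f p) \<le> kappa"
    unfolding kappa_rat_approx_def by blast
  from assms(5) Pt obtain S where SP: "S \<in> P" and St: "St = f S" by blast
  have finP: "finite P" using assms(1) unfolding polyhedron_def by blast
  have r1: "\<And>p. p \<in> P \<Longrightarrow> norm p \<le> 1" using assms(3) unfolding radius_one_def by blast
  have w0: "w \<noteq> 0" using assms(18) by auto
  have uv: "(w$1)\<^sup>2 + (w$2)\<^sup>2 \<le> 1" using assms(18) unfolding norm2 by simp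
  have "Rm \<alpha> *v (Mm \<theta>1 \<phi>1 *v S) \<in> interior (convex hull ((\<lambda>x. Mm \<theta>2 \<phi>2 *v x) ` P))"
    using sub SP by blast
  from interior_hull_max[OF this w0] obtain p where pP: "p \<in> P"
    and lt: "(Rm \<alpha> *v (Mm \<theta>1 \<phi>1 *v S)) \<bullet> w < (Mm \<theta>2 \<phi>2 *v p) \<bullet> w" by blast
  have nS: "norm (S - St) \<le> kappa" using fP SP St by auto
  note cS = vec_conds[OF r1[OF SP] nS]
  note cp = vec_conds[OF r1[OF pP], of "f p", OF conjunct2[OF fP[rule_format, OF pP]]]
  define D where "D = kappa + 18 / 10^11"
  have D4: "D \<le> 4 * kappa" and D3: "D \<le> 3 * kappa" and D0: "0 \<le> D"
    unfolding D_def by (simp_all add: kappa_def)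
  have e0: "0 \<le> \<epsilon>" using assms(6) by simp

  define L where "L = (Rm \<alpha> *v (Mm \<theta>1 \<phi>1 *v S)) \<bullet> w"
  define G0 where "G0 = (Rm a *v (Mm t1 p1 *v S)) \<bullet> w"
  define Ga where "Ga = (R'gen sin cos a *v (Mm t1 p1 *v S)) \<bullet> w"
  define Gt where "Gt = (Rm a *v (MTgen sin cos t1 p1 *v S)) \<bullet> w"
  define Gp where "Gp = (Rm a *v (MPgen sin cos t1 p1 *v S)) \<bullet> w"
  define Q0 where "Q0 = (RQ a *v (MQ t1 p1 *v St)) \<bullet> w"
  define Qa where "Qa = (R'Q a *v (MQ t1 p1 *v St)) \<bullet> w"
  define Qt where "Qt = (RQ a *v (MTQ t1 p1 *v St)) \<bullet> w"
  define Qp where "Qp = (RQ a *v (MPQ t1 p1 *v St)) \<bullet> w"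
  have tay: "\<bar>L - G0 - ((\<alpha> - a) * Ga + (\<theta>1 - t1) * Gt + (\<phi>1 - p1) * Gp)\<bar>
     \<le> (\<bar>\<alpha> - a\<bar> + \<bar>\<theta>1 - t1\<bar> + \<bar>\<phi>1 - p1\<bar>)\<^sup>2 / 2"
    using G_taylor[OF cS(1) uv, of a "\<alpha> - a" t1 "\<theta>1 - t1" p1 "\<phi>1 - p1"]
    unfolding Gf_eq G1_eq L_def G0_def Ga_def Gt_def Gp_def by simp
  have sq1: "(\<bar>\<alpha> - a\<bar> + \<bar>\<theta>1 - t1\<bar> + \<bar>\<phi>1 - p1\<bar>)\<^sup>2 \<le> (3 * \<epsilon>)\<^sup>2"
    using b1 b2 b5 by (intro power_mono) auto
  have aG0: "\<bar>G0 - Q0\<bar> \<le> D" unfolding G0_def Q0_def D_def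
    by (rule apx_RM[OF assms(16,12,13) uv cS(2,3)])
  have aGa: "\<bar>Ga - Qa\<bar> \<le> D" unfolding Ga_def Qa_def D_def
    by (rule apx_R'M[OF assms(16,12,13) uv cS(2,3)])
  have aGt: "\<bar>Gt - Qt\<bar> \<le> D" unfolding Gt_def Qt_def D_def
    by (rule apx_RMT[OF assms(16,12,13) uv cS(2,3)])
  have aGp: "\<bar>Gp - Qp\<bar> \<le> D" unfolding Gp_def Qp_def D_def
    by (rule apx_RMP[OF assms(16,12,13) uv cS(2,3)])
  have ea: "\<bar>(\<alpha> - a) * Ga\<bar> \<le> \<epsilon> * \<bar>Qa\<bar> + \<epsilon> * D" by (rule eps_abs[OF b5 aGa])
  have et: "\<bar>(\<theta>1 - t1) * Gt\<bar> \<le> \<epsilon> * \<bar>Qt\<bar> + \<epsilon> * D" by (rule eps_abs[OF b1 aGt])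
  have ep: "\<bar>(\<phi>1 - p1) * Gp\<bar> \<le> \<epsilon> * \<bar>Qp\<bar> + \<epsilon> * D" by (rule eps_abs[OF b2 aGp])
  have eD: "\<epsilon> * D \<le> \<epsilon> * (4 * kappa)" using D4 e0 by (rule mult_left_mono)
  have k1: "4 * kappa * (1 + 3 * \<epsilon>) = 4 * kappa + 3 * (\<epsilon> * (4 * kappa))" by (simp add: algebra_simps)
  have k2: "\<epsilon> * (\<bar>Qa\<bar> + \<bar>Qt\<bar> + \<bar>Qp\<bar>) = \<epsilon> * \<bar>Qa\<bar> + \<epsilon> * \<bar>Qt\<bar> + \<epsilon> * \<bar>Qp\<bar>" by (simp add: algebra_simps)
  have k3: "(3 * \<epsilon>)\<^sup>2 / 2 = 9/2 * \<epsilon>^2" by (simp add: power2_eq_square)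
  have lowL: "Q0 - \<epsilon> * (\<bar>Qa\<bar> + \<bar>Qt\<bar> + \<bar>Qp\<bar>) - 9/2 * \<epsilon>^2 - 4 * kappa * (1 + 3 * \<epsilon>) \<le> L"
    by (rule lowL_lin[OF conjunct1[OF absD[OF tay]] sq1 k3 conjunct1[OF absD[OF aG0]]
        order_trans[OF _ conjunct1[OF absD[OF ea]]] order_trans[OF _ conjunct1[OF absD[OF et]]]
        order_trans[OF _ conjunct1[OF absD[OF ep]]] eD D4 k1 k2]) simp_all

  define R where "R = (Mm \<theta>2 \<phi>2 *v p) \<bullet> w"
  define H0 where "H0 = (Mm t2 p2 *v p) \<bullet> w"
  define Ht where "Ht = (MTgen sin cos t2 p2 *v p) \<bullet> w"
  define Hp where "Hp = (MPgen sin cos t2 p2 *v p) \<bullet> w"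
  define HQ where "HQ = (\<lambda>Q. (MQ t2 p2 *v Q) \<bullet> w
               + \<epsilon> * (\<bar>(MTQ t2 p2 *v Q) \<bullet> w\<bar> + \<bar>(MPQ t2 p2 *v Q) \<bullet> w\<bar>)
               + 2 * \<epsilon>^2 + 3 * kappa * (1 + 2 * \<epsilon>))"
  define K0 where "K0 = (MQ t2 p2 *v f p) \<bullet> w"
  define Kt where "Kt = (MTQ t2 p2 *v f p) \<bullet> w"
  define Kp where "Kp = (MPQ t2 p2 *v f p) \<bullet> w"
  have tay2: "\<bar>R - H0 - ((\<theta>2 - t2) * Ht + (\<phi>2 - p2) * Hp)\<bar>
     \<le> (\<bar>0\<bar> + \<bar>\<theta>2 - t2\<bar> + \<bar>\<phi>2 - p2\<bar>)\<^sup>2 / 2"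
    using G_taylor[OF cp(1) uv, of 0 0 t2 "\<theta>2 - t2" p2 "\<phi>2 - p2"]
    unfolding R_def H0_def Ht_def Hp_def by (simp add: Gf0_eq G10_eq)
  have sq2: "(\<bar>0\<bar> + \<bar>\<theta>2 - t2\<bar> + \<bar>\<phi>2 - p2\<bar>)\<^sup>2 \<le> (2 * \<epsilon>)\<^sup>2"
    using b3 b4 by (intro power_mono) auto
  have z4: "\<bar>0::real\<bar> \<le> 4" by simp
  have aH0: "\<bar>H0 - K0\<bar> \<le> D" unfolding H0_def K0_def D_def
    by (rule apx_M[OF z4 assms(14,15) uv cp(2,3)])
  have aHt: "\<bar>Ht - Kt\<bar> \<le> D" unfolding Ht_def Kt_def D_def
    by (rule apx_MT[OF z4 assms(14,15) uv cp(2,3)])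
  have aHp: "\<bar>Hp - Kp\<bar> \<le> D" unfolding Hp_def Kp_def D_def
    by (rule apx_MP[OF z4 assms(14,15) uv cp(2,3)])
  have ht: "\<bar>(\<theta>2 - t2) * Ht\<bar> \<le> \<epsilon> * \<bar>Kt\<bar> + \<epsilon> * D" by (rule eps_abs[OF b3 aHt])
  have hp: "\<bar>(\<phi>2 - p2) * Hp\<bar> \<le> \<epsilon> * \<bar>Kp\<bar> + \<epsilon> * D" by (rule eps_abs[OF b4 aHp])
  have eD3: "\<epsilon> * D \<le> \<epsilon> * (3 * kappa)" using D3 e0 by (rule mult_left_mono)
  have k4: "3 * kappa * (1 + 2 * \<epsilon>) = 3 * kappa + 2 * (\<epsilon> * (3 * kappa))" by (simp add: algebra_simps)
  have k5: "\<epsilon> * (\<bar>Kt\<bar> + \<bar>Kp\<bar>) = \<epsilon> * \<bar>Kt\<bar> + \<epsilon> * \<bar>Kp\<bar>" by (simp add: algebra_simps)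
  have k6: "(2 * \<epsilon>)\<^sup>2 / 2 = 2 * \<epsilon>^2" by (simp add: power2_eq_square)
  have HQp: "HQ (f p) = K0 + \<epsilon> * (\<bar>Kt\<bar> + \<bar>Kp\<bar>) + 2 * \<epsilon>^2 + 3 * kappa * (1 + 2 * \<epsilon>)"
    unfolding HQ_def K0_def Kt_def Kp_def by simp
  have upR: "R \<le> HQ (f p)"
    unfolding HQp
    by (rule upR_lin[OF conjunct2[OF absD[OF tay2]] sq2 k6 conjunct2[OF absD[OF aH0]]
        order_trans[OF conjunct2[OF absD[OF ht]]] order_trans[OF conjunct2[OF absD[OF hp]]]
        eD3 D3 k4 k5]) simp_all
  have "HQ (f p) \<le> Max (HQ ` Pt)"
    using finP pP unfolding Pt by (intro Max_ge) auto
  then have "L < Max (HQ ` Pt)" using lt upR unfolding L_def R_def by linarith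
  moreover have "Max (HQ ` Pt) < Q0 - \<epsilon> * (\<bar>Qa\<bar> + \<bar>Qt\<bar> + \<bar>Qp\<bar>) - 9/2 * \<epsilon>^2 - 4 * kappa * (1 + 3 * \<epsilon>)"
    using assms(19) unfolding HQ_def Q0_def Qa_def Qt_def Qp_def by simp
  ultimately show False using lowL by linarith
qed

end
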